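(* Let $a,b,c,d\ge1$ be integers and let $$M=\begin{bmatrix}a&-1&-1&-1\\-1&b&-1&-1\\-1&-1&c&-1\\-1&-1&-1&d\end{bmatrix}.$$ If $\det M=0$, then $\min\{a,b,c,d\}\le3$. *)

theory Defs
  imports "HOL-Analysis.Analysis"
begin

definition diag_minus_one_mat :: "int \<Rightarrow> int \<Rightarrow> int \<Rightarrow> int \<Rightarrow> int^4^4" where
  "diag_minus_one_mat a b c d =
     (\<chi> i j. if i = j then (if i = 1 then a else if i = 2 then b else if i = 3 then c else d)
             else -1)"

end

theory Submission
  imports Defs
begin

lemma det_M:
  "det (diag_minus_one_mat a b c d) =
     (a+1)*(b+1)*(c+1)*(d+1) - ((b+1)*(c+1)*(d+1) + (a+1)*(c+1)*(d+1) + (a+1)*(b+1)*(d+1) + (a+1)*(b+1)*(c+1))"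
proof -
  have f1: "finite {2::4, 3, 4}" "1 \<notin> {2::4, 3, 4}" by auto
  have f2: "finite {3::4, 4}" "2 \<notin> {3::4, 4}" by auto
  have f3: "finite {4::4}" "3 \<notin> {4::4}" by auto
  show ?thesis
    unfolding det_def UNIV_4
    unfolding sum_over_permutations_insert[OF f1]
    unfolding sum_over_permutations_insert[OF f2]
    unfolding sum_over_permutations_insert[OF f3]
    unfolding permutes_sing
    by (simp add: diag_minus_one_mat_def sign_swap_id permutation_swap_id sign_compose permutation_compose sign_id swap_id_eq algebra_simps)
qed

theorem lemma3p5:
  fixes a b c d :: int
  assumes "a \<ge> 1" and "b \<ge> 1" and "c \<ge> 1" and "d \<ge> 1"
    and "det (diag_minus_one_mat a b c d) = 0"
  shows "min (min a b) (min c d) \<le> 3"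
proof (rule ccontr)
  assume "\<not> ?thesis"
  then have h: "a+1 \<ge> 5" "b+1 \<ge> 5" "c+1 \<ge> 5" "d+1 \<ge> 5" by auto
  define A where "A = a+1"
  define B where "B = b+1"
  define C where "C = c+1"
  define D where "D = d+1"
  have p: "A \<ge> 5" "B \<ge> 5" "C \<ge> 5" "D \<ge> 5" using h A_def B_def C_def D_def by auto
  have e: "A*B*C*D = B*C*D + A*C*D + A*B*D + A*B*C"
    using assms(5) unfolding det_M A_def B_def C_def D_def by simp
  have "A*(B*C*D) \<ge> 5*(B*C*D)" using p by (intro mult_right_mono) auto
  moreover have "B*(A*C*D) \<ge> 5*(A*C*D)" using p by (intro mult_right_mono) auto
  moreover have "C*(A*B*D) \<ge> 5*(A*B*D)" using p by (intro mult_right_mono) auto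
  moreover have "D*(A*B*C) \<ge> 5*(A*B*C)" using p by (intro mult_right_mono) auto
  moreover have "A*B*C > 0" using p by simp
  ultimately show False using e by (simp add: algebra_simps)
qed

end
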